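(* Let $3\leq q<p$ be primes with $q-1\mid p-1$. Let $f:\mathbb{Z}_p\to\mathbb{Z}_q$ satisfy $f(0)=0$ and be such that the restriction of $f$ to $\mathbb{Z}_p^\times$ is a surjective group homomorphism $\mathbb{Z}_p^\times\to\mathbb{Z}_q^\times$ (of multiplicative groups). Let $A$ be the $p\times p$ matrix over the field $\mathbb{Z}_q$, with rows and columns indexed by $\mathbb{Z}_p$, given by $A_{i+j,i}=f(j)$ for $i,j\in\mathbb{Z}_p$. Then $A$ has rank $p-1$. *)

theory Defs
  imports "HOL-Analysis.Analysis" "Berlekamp_Zassenhaus.Finite_Field"
begin

text \<open>Z_p is modelled by the type 'p mod_ring with 'p :: prime_card (so p = CARD('p) is prime);
  likewise Z_q.  The matrix indexed by Z_p x Z_p is an element of 'q mod_ring ^ 'p mod_ring ^ 'p mod_ring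
  (HOL-Analysis), and rank is the HOL-Analysis rank of a matrix over a field.\<close>

end

theory Submission
  imports Defs
begin

lemma two_ne0:
  assumes "3 \<le> CARD('q::prime_card)"
  shows "(2::'q mod_ring) \<noteq> 0"
proof
  assume "(2::'q mod_ring) = 0"
  then have "of_nat 2 = (0::'q mod_ring)" by simp
  then have "CARD('q) dvd 2" by (rule of_nat_0_mod_ring_dvd)
  then have "CARD('q) \<le> 2" by (rule dvd_imp_le) simp
  then show False using assms by simp
qed

lemma p_ne0:
  assumes "CARD('q::prime_card) < CARD('p::prime_card)"
  shows "(of_nat CARD('p) :: 'q mod_ring) \<noteq> 0"
proof
  assume "(of_nat CARD('p) :: 'q mod_ring) = 0"
  then have d: "CARD('q) dvd CARD('p)" by (rule of_nat_0_mod_ring_dvd)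
  have "prime CARD('p)" by (rule prime_card)
  moreover have "prime CARD('q)" by (rule prime_card)
  ultimately show False using d assms
    by (metis nat_less_le prime_nat_iff not_prime_1)
qed

lemma sum_f_zero:
  fixes f :: "'p::prime_card mod_ring \<Rightarrow> 'q::prime_card mod_ring"
  assumes "3 \<le> CARD('q)"
    and f0: "f 0 = 0"
    and mult: "\<And>x y. x \<noteq> 0 \<Longrightarrow> y \<noteq> 0 \<Longrightarrow> f (x * y) = f x * f y"
    and surj: "\<And>z. z \<noteq> 0 \<Longrightarrow> \<exists>x. x \<noteq> 0 \<and> f x = z"
  shows "(\<Sum>x\<in>UNIV. f x) = 0"
proof -
  have "(-1::'q mod_ring) \<noteq> 0" by simp
  then obtain z where z: "z \<noteq> 0" "f z = -1" using surj by blast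
  have "(\<Sum>x\<in>UNIV. f x) = (\<Sum>x\<in>UNIV. f (z * x))"
    by (rule sum.reindex_bij_witness[of _ "\<lambda>x. z * x" "\<lambda>x. x / z"]) (use z in auto)
  also have "\<dots> = (\<Sum>x\<in>UNIV. - f x)"
  proof (rule sum.cong)
    fix x :: "'p mod_ring"
    show "f (z * x) = - f x"
    proof (cases "x = 0")
      case True then show ?thesis using f0 by simp
    next
      case False then show ?thesis using z mult by simp
    qed
  qed simp
  also have "\<dots> = - (\<Sum>x\<in>UNIV. f x)" by (simp add: sum_negf)
  finally have "2 * (\<Sum>x\<in>UNIV. f x) = 0" by simp
  then show ?thesis using two_ne0[OF assms(1)] by simp
qed

lemma key_sum:
  fixes f :: "'p::prime_card mod_ring \<Rightarrow> 'q::prime_card mod_ring"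
  assumes q3: "3 \<le> CARD('q)"
    and f0: "f 0 = 0"
    and fnz: "\<And>x. x \<noteq> 0 \<Longrightarrow> f x \<noteq> 0"
    and mult: "\<And>x y. x \<noteq> 0 \<Longrightarrow> y \<noteq> 0 \<Longrightarrow> f (x * y) = f x * f y"
    and surj: "\<And>z. z \<noteq> 0 \<Longrightarrow> \<exists>x. x \<noteq> 0 \<and> f x = z"
  shows "(\<Sum>t\<in>UNIV. inverse (f (d - t)) * f t)
     = f (-1) * (if d = 0 then of_nat CARD('p) - 1 else -1)"
proof -
  have S0: "(\<Sum>x\<in>UNIV. f x) = 0" by (rule sum_f_zero[OF q3 f0 mult surj])
  have f1: "f 1 = 1"
  proof -
    have "f 1 = f 1 * f 1" using mult[of 1 1] by simp
    then show ?thesis using fnz[of 1] by simp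
  qed
  have fm1: "f (-1) * f (-1) = 1" using mult[of "-1" "-1"] f1 by simp
  have finv: "f (inverse x) = inverse (f x)" for x
  proof (cases "x = 0")
    case True then show ?thesis using f0 by simp
  next
    case False
    then have "f x * f (inverse x) = 1" using mult[of x "inverse x"] f1 by simp
    then show ?thesis by (metis inverse_unique)
  qed
  have im1: "inverse (f (-1)) = f (-1)" using fm1 by (metis inverse_unique)
  show ?thesis
  proof (cases "d = 0")
    case True
    have "(\<Sum>t\<in>UNIV. inverse (f (d - t)) * f t) = (\<Sum>t\<in>(UNIV::'p mod_ring set). if t = 0 then 0 else f (-1))"
    proof (rule sum.cong)
      fix t :: "'p mod_ring"
      show "inverse (f (d - t)) * f t = (if t = 0 then 0 else f (-1))"
      proof (cases "t = 0")
        case True then show ?thesis using f0 by simp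
      next
        case False
        have "f (d - t) = f (-1) * f t" using True False mult[of "-1" t] by simp
        then show ?thesis using False fnz[of t] im1 by (simp add: field_simps)
      qed
    qed simp
    also have "\<dots> = (\<Sum>t\<in>(UNIV::'p mod_ring set) - {0}. f (-1))"
      by (simp add: sum.If_cases Compl_eq_Diff_UNIV)
    also have "\<dots> = f (-1) * (of_nat CARD('p) - 1)"
      by (simp add: of_nat_diff mult.commute)
    finally show ?thesis using True by simp
  next
    case False
    have "(\<Sum>t\<in>UNIV. inverse (f (d - t)) * f t) = (\<Sum>s\<in>UNIV. inverse (f (d - d * s)) * f (d * s))"
      by (rule sum.reindex_bij_witness[of _ "\<lambda>s. d * s" "\<lambda>t. t / d"]) (use False in auto)
    also have "\<dots> = (\<Sum>s\<in>UNIV. f (s / (1 - s)))"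
    proof (rule sum.cong)
      fix s :: "'p mod_ring"
      show "inverse (f (d - d * s)) * f (d * s) = f (s / (1 - s))"
      proof (cases "s = 0 \<or> s = 1")
        case True then show ?thesis using f0 by auto
      next
        case nt: False
        then have s1: "1 - s \<noteq> 0" by simp
        have e1: "f (d - d * s) = f d * f (1 - s)" using mult[of d "1 - s"] False s1
          by (simp add: algebra_simps)
        have e2: "f (d * s) = f d * f s" using mult[of d s] False nt by simp
        have e3: "f (s / (1 - s)) = f s * inverse (f (1 - s))"
          using mult[of s "inverse (1 - s)"] nt s1 finv by (simp add: divide_inverse)
        show ?thesis using e1 e2 e3 fnz[OF False] fnz[OF s1] by (simp add: field_simps)
      qed
    qed simp
    also have "\<dots> = (\<Sum>s\<in>UNIV - {1}. f (s / (1 - s))) + f (1 / (1 - 1))"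
      by (simp add: sum_diff1)
    also have "\<dots> = (\<Sum>s\<in>UNIV - {1}. f (s / (1 - s)))" using f0 by simp
    also have "\<dots> = (\<Sum>u\<in>UNIV - {-1}. f u)"
    proof (rule sum.reindex_bij_witness[of _ "\<lambda>u. u / (1 + u)" "\<lambda>s. s / (1 - s)"])
      fix s :: "'p mod_ring" assume "s \<in> UNIV - {1}"
      then have s1: "1 - s \<noteq> 0" by simp
      show "s / (1 - s) / (1 + s / (1 - s)) = s" using s1 by (simp add: field_simps)
      show "s / (1 - s) \<in> UNIV - {-1}"
      proof
        show "s / (1 - s) \<notin> {-1}" using s1 by (simp add: field_simps)
      qed simp
    next
      fix u :: "'p mod_ring" assume "u \<in> UNIV - {-1}"
      then have u1: "1 + u \<noteq> 0" by (metis DiffD2 add.commute add_eq_0_iff singletonI)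
      show "u / (1 + u) / (1 - u / (1 + u)) = u" using u1 by (simp add: field_simps)
      show "u / (1 + u) \<in> UNIV - {1}" using u1 by (simp add: field_simps)
    qed simp
    also have "\<dots> = (\<Sum>u\<in>UNIV. f u) - f (-1)"
      by (simp add: sum_diff1)
    finally show ?thesis using False S0 by simp
  qed
qed

theorem lemma4p7:
  fixes f :: "'p::prime_card mod_ring \<Rightarrow> 'q::prime_card mod_ring"
  assumes "3 \<le> CARD('q)" and "CARD('q) < CARD('p)"
    and "(CARD('q) - 1) dvd (CARD('p) - 1)"
    and "f 0 = 0"
    and "\<And>x. x \<noteq> 0 \<Longrightarrow> f x \<noteq> 0"
    and "\<And>x y. x \<noteq> 0 \<Longrightarrow> y \<noteq> 0 \<Longrightarrow> f (x * y) = f x * f y"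
    and "\<And>z. z \<noteq> 0 \<Longrightarrow> \<exists>x. x \<noteq> 0 \<and> f x = z"
    and "\<And>i j. A $ (i + j) $ i = f j"
  shows "rank A = CARD('p) - 1"
proof -
  note q3 = assms(1) and f0 = assms(4) and fnz = assms(5) and mult = assms(6) and surj = assms(7)
  have Aki: "A $ k $ i = f (k - i)" for k i
    using assms(8)[of i "k - i"] by simp
  have S0: "(\<Sum>x\<in>UNIV. f x) = 0" by (rule sum_f_zero[OF q3 f0 mult surj])
  have pnz: "(of_nat CARD('p) :: 'q mod_ring) \<noteq> 0" by (rule p_ne0[OF assms(2)])
  have f1: "f 1 = 1"
  proof -
    have "f 1 = f 1 * f 1" using mult[of 1 1] by simp
    then show ?thesis using fnz[of 1] by simp
  qed
  have fm1: "f (-1) \<noteq> 0" using fnz by simp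
  define one :: "'q mod_ring ^ 'p mod_ring" where "one = (\<chi> i. 1)"
  define R where "R = rows A"
  have rowA: "row m A $ i = f (m - i)" for m i by (simp add: row_def Aki)
  have wk: "(\<Sum>m\<in>UNIV. inverse (f (k - m)) *s row m A) \<in> vec.span R" for k
  proof (rule vec.span_sum)
    fix m :: "'p mod_ring"
    have "row m A \<in> R" by (auto simp: R_def rows_def)
    then show "inverse (f (k - m)) *s row m A \<in> vec.span R"
      by (intro vec.span_scale vec.span_base)
  qed
  have wk_comp: "(\<Sum>m\<in>UNIV. inverse (f (k - m)) *s row m A) $ i
      = f (-1) * (if k = i then of_nat CARD('p) - 1 else -1)" for k i
  proof -
    have "(\<Sum>m\<in>UNIV. inverse (f (k - m)) *s row m A) $ i = (\<Sum>m\<in>UNIV. inverse (f (k - m)) * f (m - i))"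
      by (simp add: rowA)
    also have "\<dots> = (\<Sum>t\<in>UNIV. inverse (f ((k - i) - t)) * f t)"
      by (rule sum.reindex_bij_witness[of _ "\<lambda>t. t + i" "\<lambda>m. m - i"]) (auto simp: algebra_simps)
    also have "\<dots> = f (-1) * (if k - i = 0 then of_nat CARD('p) - 1 else -1)"
      by (rule key_sum[OF q3 f0 fnz mult surj])
    finally show ?thesis by simp
  qed
  have axk: "axis k 1 \<in> vec.span (insert one R)" for k
  proof -
    let ?w = "(\<Sum>m\<in>UNIV. inverse (f (k - m)) *s row m A)"
    have g: "inverse (f (-1)) * (f (-1) * x) = x" for x
      using fm1 by (simp add: mult.assoc[symmetric])
    have comp: "(inverse (of_nat CARD('p)) *s (inverse (f (-1)) *s ?w + one)) $ i = axis k 1 $ i" for i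
    proof -
      have "(inverse (of_nat CARD('p)) *s (inverse (f (-1)) *s ?w + one)) $ i
          = inverse (of_nat CARD('p)) * (inverse (f (-1)) * (?w $ i) + 1)"
        by (simp only: vector_smult_component vector_add_component one_def vec_lambda_beta)
      also have "\<dots> = inverse (of_nat CARD('p)) * ((if k = i then of_nat CARD('p) - 1 else - 1) + 1)"
        by (simp only: wk_comp g)
      also have "\<dots> = (if k = i then 1 else 0)"
        using pnz by (cases "k = i") simp_all
      also have "\<dots> = axis k 1 $ i"
        by (auto simp: axis_def)
      finally show ?thesis .
    qed
    have e: "axis k 1 = inverse (of_nat CARD('p)) *s (inverse (f (-1)) *s ?w + one)"
      using comp by (simp only: vec_eq_iff) (metis (no_types))
    have w: "?w \<in> vec.span (insert one R)"
      using wk vec.span_mono[of R "insert one R"] by blast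
    have o: "one \<in> vec.span (insert one R)" by (simp add: vec.span_base)
    show ?thesis unfolding e by (intro vec.span_scale vec.span_add w o)
  qed
  have "vec.span (insert one R) = UNIV"
  proof -
    have "cart_basis \<subseteq> vec.span (insert one R)"
      using axk by (auto simp: cart_basis_def)
    then have "vec.span cart_basis \<subseteq> vec.span (insert one R)"
      by (rule vec.span_minimal[OF _ vec.subspace_span])
    then show ?thesis by auto
  qed
  then have "vec.dim (insert one R) = CARD('p mod_ring)"
    by (metis vec.dim_span vec_dim_card)
  then have low: "CARD('p) \<le> vec.dim R + 1"
    using vec.dim_insert[of one R] by (simp split: if_splits)
  define S where "S = {v :: 'q mod_ring ^ 'p mod_ring. (\<Sum>i\<in>UNIV. v $ i) = 0}"
  have subS: "vec.subspace S"
    unfolding vec.subspace_def S_def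
    by (auto simp: sum.distrib sum_distrib_left[symmetric])
  have RS: "R \<subseteq> S"
  proof
    fix v assume "v \<in> R"
    then obtain m where v: "v = row m A" by (auto simp: R_def rows_def)
    have "(\<Sum>i\<in>UNIV. v $ i) = (\<Sum>i\<in>UNIV. f (m - i))" by (simp add: v rowA)
    also have "\<dots> = (\<Sum>x\<in>UNIV. f x)"
      by (rule sum.reindex_bij_witness[of _ "\<lambda>x. m - x" "\<lambda>i. m - i"]) auto
    finally show "v \<in> S" using S0 by (simp add: S_def)
  qed
  have oneS: "one \<notin> vec.span S"
  proof -
    have sp: "vec.span S = S" using subS by (rule vec.span_eq_iff[THEN iffD2])
    have "one \<notin> S" using pnz by (simp add: S_def one_def)
    then show ?thesis using sp by metis
  qed
  have "vec.dim (insert one S) = vec.dim S + 1"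
    using vec.dim_insert[of one S] oneS by simp
  moreover have "vec.dim (insert one S) \<le> CARD('p mod_ring)"
    by (rule dim_subset_UNIV_cart_gen)
  moreover have "vec.dim R \<le> vec.dim S" using RS by (rule vec.dim_subset)
  ultimately have up: "vec.dim R + 1 \<le> CARD('p)" by simp
  have "rank A = vec.dim R" by (simp add: row_rank_def_gen R_def)
  then show ?thesis using low up by simp
qed

end
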